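(* Let $t_0\in\mathbb R$, $N\in\mathbb N^*$ and $G\in\mathcal A_N([t_0,\infty[)$. Then $$\sup_{t\ge t_0}\Big\{\Big|\int_{t_0}^t\cos(2s)G(s)\,ds\Big|,\ \Big|\int_{t_0}^t\sin(2s)G(s)\,ds\Big|\Big\}<\infty.$$
   Context: For $N\in\mathbb N^*$, $\mathcal A_N([t_0,\infty[)$ is the class of $C^N$ functions $G$ on $[t_0,\infty[$ such that $G^{(N)}\in L^1([t_0,\infty[)$ and $G^{(j)}(t)\to0$ as $t\to\infty$ for $0\le j\le N-1$. *)

theory Defs
  imports "HOL-Analysis.Analysis"
begin

definition class_A :: "nat \<Rightarrow> real \<Rightarrow> (real \<Rightarrow> real) \<Rightarrow> bool" where
  "class_A N t0 G \<longleftrightarrow>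
     (\<exists>D :: nat \<Rightarrow> real \<Rightarrow> real.
        (\<forall>t\<in>{t0..}. D 0 t = G t) \<and>
        (\<forall>j<N. \<forall>t\<in>{t0..}. (D j has_real_derivative D (Suc j) t) (at t within {t0..})) \<and>
        continuous_on {t0..} (D N) \<and>
        D N absolutely_integrable_on {t0..} \<and>
        (\<forall>j<N. (D j \<longlongrightarrow> 0) at_top))"

end

theory Submission
  imports Defs
begin

lemma bdd_tendsto0:
  fixes f :: "real \<Rightarrow> real"
  assumes c: "continuous_on {t0..} f" and l: "(f \<longlongrightarrow> 0) at_top"
  shows "\<exists>B. \<forall>t\<ge>t0. \<bar>f t\<bar> \<le> B"
proof -
  from l have "\<forall>\<^sub>F t in at_top. dist (f t) 0 < 1" by (simp add: tendsto_iff)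
  then obtain T where T: "\<And>t. t \<ge> T \<Longrightarrow> \<bar>f t\<bar> < 1"
    by (auto simp: eventually_at_top_linorder)
  have "compact (f ` {t0..max T t0})"
    by (rule compact_continuous_image) (auto intro: continuous_on_subset[OF c])
  then obtain B where B: "\<And>y. y \<in> f ` {t0..max T t0} \<Longrightarrow> norm y \<le> B"
    using compact_imp_bounded bounded_iff by metis
  show ?thesis
  proof (intro exI allI impI)
    fix t assume "t \<ge> t0"
    show "\<bar>f t\<bar> \<le> max B 1"
    proof (cases "t \<le> max T t0")
      case True then show ?thesis using B[of "f t"] \<open>t \<ge> t0\<close> by force
    next
      case False then show ?thesis using T[of t] by linarith
    qed
  qed
qed

lemma ibp_step:
  fixes f f' :: "real \<Rightarrow> real"
  assumes d: "\<And>t. t \<ge> t0 \<Longrightarrow> (f has_real_derivative f' t) (at t within {t0..})"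
    and c': "continuous_on {t0..} f'"
    and B: "\<And>t. t \<ge> t0 \<Longrightarrow> \<bar>f t\<bar> \<le> B"
    and M: "\<forall>t\<ge>t0. \<bar>integral {t0..t} (\<lambda>s. cos (2 * s) * f' s)\<bar> \<le> M \<and>
                  \<bar>integral {t0..t} (\<lambda>s. sin (2 * s) * f' s)\<bar> \<le> M"
  shows "\<forall>t\<ge>t0. \<bar>integral {t0..t} (\<lambda>s. cos (2 * s) * f s)\<bar> \<le> B + M \<and>
                  \<bar>integral {t0..t} (\<lambda>s. sin (2 * s) * f s)\<bar> \<le> B + M"
proof (intro allI impI conjI)
  fix t assume t: "t \<ge> t0"
  have c: "continuous_on {t0..} f"
    using d by (auto simp: continuous_on_eq_continuous_within intro: DERIV_continuous)
  have cf: "continuous_on {t0..t} f" by (rule continuous_on_subset[OF c]) auto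
  have cf': "continuous_on {t0..t} f'" by (rule continuous_on_subset[OF c']) auto
  have i1: "(\<lambda>s. cos (2 * s) * f s) integrable_on {t0..t}"
    by (intro integrable_continuous_interval continuous_intros cf)
  have i2: "(\<lambda>s. sin (2 * s) * f s) integrable_on {t0..t}"
    by (intro integrable_continuous_interval continuous_intros cf)
  have i3: "(\<lambda>s. sin (2 * s) / 2 * f' s) integrable_on {t0..t}"
    by (auto intro!: integrable_continuous_interval continuous_intros cf')
  have i4: "(\<lambda>s. cos (2 * s) / 2 * f' s) integrable_on {t0..t}"
    by (auto intro!: integrable_continuous_interval continuous_intros cf')
  have dx: "\<And>x. x \<in> {t0..t} \<Longrightarrow> (f has_real_derivative f' x) (at x within {t0..t})"
    by (rule DERIV_subset[OF d]) auto
  have F1: "((\<lambda>s. cos (2 * s) * f s + sin (2 * s) / 2 * f' s) has_integral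
      (sin (2 * t) / 2 * f t - sin (2 * t0) / 2 * f t0)) {t0..t}"
  proof (rule fundamental_theorem_of_calculus[OF t, of "\<lambda>s. sin (2 * s) / 2 * f s"])
    fix x assume x: "x \<in> {t0..t}"
    have "((\<lambda>s. sin (2 * s) / 2 * f s) has_real_derivative
        (cos (2 * x) * 2 / 2 * f x + sin (2 * x) / 2 * f' x)) (at x within {t0..t})"
      by (auto intro!: derivative_eq_intros dx[OF x])
    then show "((\<lambda>s. sin (2 * s) / 2 * f s) has_vector_derivative
        (cos (2 * x) * f x + sin (2 * x) / 2 * f' x)) (at x within {t0..t})"
      by (simp add: has_real_derivative_iff_has_vector_derivative)
  qed
  have F2: "((\<lambda>s. sin (2 * s) * f s - cos (2 * s) / 2 * f' s) has_integral
      (- cos (2 * t) / 2 * f t - (- cos (2 * t0) / 2 * f t0))) {t0..t}"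
  proof (rule fundamental_theorem_of_calculus[OF t, of "\<lambda>s. - cos (2 * s) / 2 * f s"])
    fix x assume x: "x \<in> {t0..t}"
    have "((\<lambda>s. - cos (2 * s) / 2 * f s) has_real_derivative
        (sin (2 * x) * f x - cos (2 * x) / 2 * f' x)) (at x within {t0..t})"
    proof -
      have h: "((\<lambda>s. - cos (2 * s) / 2) has_real_derivative sin (2 * x)) (at x within {t0..t})"
        by (auto intro!: derivative_eq_intros)
      show ?thesis using DERIV_mult[OF h dx[OF x]] by (simp add: algebra_simps)
    qed
    then show "((\<lambda>s. - cos (2 * s) / 2 * f s) has_vector_derivative
        (sin (2 * x) * f x - cos (2 * x) / 2 * f' x)) (at x within {t0..t})"
      by (simp add: has_real_derivative_iff_has_vector_derivative field_simps)
  qed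
  have e1: "integral {t0..t} (\<lambda>s. cos (2 * s) * f s) =
      (sin (2 * t) / 2 * f t - sin (2 * t0) / 2 * f t0) - integral {t0..t} (\<lambda>s. sin (2 * s) / 2 * f' s)"
    using integral_add[OF i1 i3] F1 by (simp add: integral_unique)
  have e2: "integral {t0..t} (\<lambda>s. sin (2 * s) * f s) =
      (- cos (2 * t) / 2 * f t - (- cos (2 * t0) / 2 * f t0)) + integral {t0..t} (\<lambda>s. cos (2 * s) / 2 * f' s)"
    using integral_diff[OF i2 i4] F2 by (simp add: integral_unique)
  have s1: "integral {t0..t} (\<lambda>s. sin (2 * s) / 2 * f' s) = integral {t0..t} (\<lambda>s. sin (2 * s) * f' s) / 2"
    using integral_mult_right[where c="1/2" and f="\<lambda>s. sin (2 * s) * f' s" and S="{t0..t}"] by (simp add: mult_ac)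
  have s2: "integral {t0..t} (\<lambda>s. cos (2 * s) / 2 * f' s) = integral {t0..t} (\<lambda>s. cos (2 * s) * f' s) / 2"
    using integral_mult_right[where c="1/2" and f="\<lambda>s. cos (2 * s) * f' s" and S="{t0..t}"] by (simp add: mult_ac)
  have bt: "\<bar>f t\<bar> \<le> B" "\<bar>f t0\<bar> \<le> B" using B t by auto
  have hb: "\<bar>a / 2 * y\<bar> \<le> B / 2" if "\<bar>y\<bar> \<le> B" "\<bar>a\<bar> \<le> 1" for a y :: real
  proof -
    have "\<bar>a\<bar> * \<bar>y\<bar> \<le> 1 * B" using that by (intro mult_mono) auto
    then show ?thesis by (simp add: abs_mult)
  qed
  have b1: "\<bar>sin (2 * t) / 2 * f t\<bar> \<le> B / 2" "\<bar>sin (2 * t0) / 2 * f t0\<bar> \<le> B / 2"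
       "\<bar>cos (2 * t) / 2 * f t\<bar> \<le> B / 2" "\<bar>cos (2 * t0) / 2 * f t0\<bar> \<le> B / 2"
    by (rule hb[OF bt(1) abs_sin_le_one] hb[OF bt(2) abs_sin_le_one]
        hb[OF bt(1) abs_cos_le_one] hb[OF bt(2) abs_cos_le_one])+
  show "\<bar>integral {t0..t} (\<lambda>s. cos (2 * s) * f s)\<bar> \<le> B + M"
    unfolding e1 s1 using b1 M t by (auto simp: abs_le_iff)
  show "\<bar>integral {t0..t} (\<lambda>s. sin (2 * s) * f s)\<bar> \<le> B + M"
    unfolding e2 s2 using b1 M t by (auto simp: abs_le_iff)
qed

theorem lemma4p3:
  fixes t0 :: real and N :: nat and G :: "real \<Rightarrow> real"
  assumes "N \<ge> 1" and "class_A N t0 G"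
  shows "\<exists>M. \<forall>t\<ge>t0.
           abs (integral {t0..t} (\<lambda>s. cos (2 * s) * G s)) \<le> M \<and>
           abs (integral {t0..t} (\<lambda>s. sin (2 * s) * G s)) \<le> M"
proof -
  obtain D :: "nat \<Rightarrow> real \<Rightarrow> real" where
    D0: "\<forall>t\<in>{t0..}. D 0 t = G t" and
    Dd: "\<forall>j<N. \<forall>t\<in>{t0..}. (D j has_real_derivative D (Suc j) t) (at t within {t0..})" and
    DcN: "continuous_on {t0..} (D N)" and
    DiN: "D N absolutely_integrable_on {t0..}" and
    Dl: "\<forall>j<N. (D j \<longlongrightarrow> 0) at_top"
    using assms(2) unfolding class_A_def by blast
  have Dc: "continuous_on {t0..} (D j)" if "j \<le> N" for j
  proof (cases "j = N")
    case True then show ?thesis using DcN by simp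
  next
    case False
    then have "j < N" using that by simp
    then show ?thesis using Dd
      by (auto simp: continuous_on_eq_continuous_within intro: DERIV_continuous)
  qed
  have base: "\<exists>M. \<forall>t\<ge>t0. \<bar>integral {t0..t} (\<lambda>s. cos (2 * s) * D N s)\<bar> \<le> M \<and>
                  \<bar>integral {t0..t} (\<lambda>s. sin (2 * s) * D N s)\<bar> \<le> M"
  proof (intro exI allI impI conjI)
    fix t assume t: "t \<ge> t0"
    have cN: "continuous_on {t0..t} (D N)" by (rule continuous_on_subset[OF DcN]) auto
    have nI: "(\<lambda>s. norm (D N s)) integrable_on {t0..}"
      using DiN by (simp add: absolutely_integrable_on_def)
    have nIt: "(\<lambda>s. norm (D N s)) integrable_on {t0..t}"
      by (intro integrable_continuous_interval continuous_intros cN)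
    have le: "integral {t0..t} (\<lambda>s. norm (D N s)) \<le> integral {t0..} (\<lambda>s. norm (D N s))"
      by (rule integral_subset_le[OF _ nIt nI]) auto
    have "norm (integral {t0..t} (\<lambda>s. cos (2 * s) * D N s)) \<le> integral {t0..t} (\<lambda>s. norm (D N s))"
      by (rule integral_norm_bound_integral)
         (auto intro!: integrable_continuous_interval continuous_intros cN nIt
               simp: abs_mult intro: mult_left_le_one_le)
    then show "\<bar>integral {t0..t} (\<lambda>s. cos (2 * s) * D N s)\<bar> \<le> integral {t0..} (\<lambda>s. norm (D N s))"
      using le by simp
    have "norm (integral {t0..t} (\<lambda>s. sin (2 * s) * D N s)) \<le> integral {t0..t} (\<lambda>s. norm (D N s))"
      by (rule integral_norm_bound_integral)
         (auto intro!: integrable_continuous_interval continuous_intros cN nIt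
               simp: abs_mult intro: mult_left_le_one_le)
    then show "\<bar>integral {t0..t} (\<lambda>s. sin (2 * s) * D N s)\<bar> \<le> integral {t0..} (\<lambda>s. norm (D N s))"
      using le by simp
  qed
  have main: "m \<le> N \<Longrightarrow> \<exists>M. \<forall>t\<ge>t0. \<bar>integral {t0..t} (\<lambda>s. cos (2 * s) * D (N - m) s)\<bar> \<le> M \<and>
                  \<bar>integral {t0..t} (\<lambda>s. sin (2 * s) * D (N - m) s)\<bar> \<le> M" for m
  proof (induction m)
    case 0 then show ?case using base by simp
  next
    case (Suc m)
    define k where "k = N - Suc m"
    have k: "k < N" "Suc k = N - m" using Suc.prems by (auto simp: k_def)
    obtain M where M: "\<forall>t\<ge>t0. \<bar>integral {t0..t} (\<lambda>s. cos (2 * s) * D (Suc k) s)\<bar> \<le> M \<and>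
                  \<bar>integral {t0..t} (\<lambda>s. sin (2 * s) * D (Suc k) s)\<bar> \<le> M"
      using Suc.IH Suc.prems k(2) by auto
    obtain B where B: "\<forall>t\<ge>t0. \<bar>D k t\<bar> \<le> B"
      using bdd_tendsto0[OF Dc[of k]] Dl k by auto
    have "\<forall>t\<ge>t0. \<bar>integral {t0..t} (\<lambda>s. cos (2 * s) * D k s)\<bar> \<le> B + M \<and>
                  \<bar>integral {t0..t} (\<lambda>s. sin (2 * s) * D k s)\<bar> \<le> B + M"
      by (rule ibp_step[OF _ Dc[of "Suc k"] _ M]) (use Dd k B in auto)
    then show ?case unfolding k_def by blast
  qed
  obtain M where M: "\<forall>t\<ge>t0. \<bar>integral {t0..t} (\<lambda>s. cos (2 * s) * D 0 s)\<bar> \<le> M \<and>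
                  \<bar>integral {t0..t} (\<lambda>s. sin (2 * s) * D 0 s)\<bar> \<le> M"
    using main[of N] by auto
  have eq: "integral {t0..t} (\<lambda>s. h (2 * s) * D 0 s) = integral {t0..t} (\<lambda>s. h (2 * s) * G s)"
    for t and h :: "real \<Rightarrow> real"
    by (rule integral_cong) (use D0 in auto)
  show ?thesis using M eq by metis
qed

end
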